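(* Suppose $\frac1{\sqrt5}<a<\frac{\sqrt{105}-5}{10}$. Then for all integers $n\ge2$, \[ (3a-5a^3+2a^{2n+1})n+3a^{2n+1}-3a\ge0 \] and \[ (-3+30a^2-35a^4+8a^{2n+2})n^2+(3-35a^4+32a^{2n+2})n+30a^{2n+2}-30a^2\ge0. \] *)

theory Defs
  imports Complex_Main
begin

end

theory Submission
  imports Defs
begin

theorem lemma4p4:
  fixes a :: real and n :: nat
  assumes "1 / sqrt 5 < a" and "a < (sqrt 105 - 5) / 10" and "n \<ge> 2"
  shows "(3*a - 5*a^3 + 2*a^(2*n+1)) * real n + 3*a^(2*n+1) - 3*a \<ge> 0 \<and>
         (-3 + 30*a^2 - 35*a^4 + 8*a^(2*n+2)) * (real n)^2
          + (3 - 35*a^4 + 32*a^(2*n+2)) * real n + 30*a^(2*n+2) - 30*a^2 \<ge> 0"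
proof -
  have s5: "sqrt 5 > 0" by simp
  have apos: "a > 0" using assms(1) s5 by (meson divide_pos_pos less_trans zero_less_one)
  have "1 < a * sqrt 5" using assms(1) s5 by (simp add: divide_less_eq mult.commute)
  hence "1 < (a * sqrt 5)^2" by (simp add: one_less_power)
  hence x1: "a^2 > 1/5" by (simp add: power_mult_distrib)
  have "sqrt 105 < 10.25" by (rule real_less_lsqrt) (auto simp: power2_eq_square)
  hence "a < 0.525" using assms(2) by simp
  hence "a^2 < 0.525^2" using apos by (intro power_strict_mono) auto
  hence x2: "a^2 < 441/1600" by (simp add: power2_eq_square)
  define x where "x = a^2"
  define t where "t = a^(2*n)"
  define N where "N = real n"
  have N2: "N \<ge> 2" using assms(3) N_def by simp
  have tpos: "t \<ge> 0" unfolding t_def by simp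
  have x1': "x > 1/5" and x2': "x < 441/1600" using x1 x2 x_def by auto
  have e1: "3*a - 5*a^3 + 2*a^(2*n+1) = a * (3 - 5*x + 2*t)"
    by (simp add: x_def t_def power_add algebra_simps power2_eq_square power3_eq_cube)
  have e2: "a^(2*n+1) = a * t" by (simp add: t_def)
  have e3: "a^(2*n+2) = x * t" by (simp add: t_def x_def power_add power2_eq_square)
  have e4: "a^4 = x^2" by (simp add: x_def flip: power_mult)
  have A1: "(3 - 5*x + 2*t) * N + 3*t - 3 \<ge> 0"
  proof -
    have "(3 - 5*x) * N \<ge> (3-5*x)*2" using N2 x2' by (intro mult_left_mono) auto
    moreover have "2*t*N \<ge> 0" using tpos N2 by simp
    ultimately show ?thesis using x2' tpos by (simp add: algebra_simps)
  qed
  have P1: "(3*a - 5*a^3 + 2*a^(2*n+1)) * real n + 3*a^(2*n+1) - 3*a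
      = a * ((3 - 5*x + 2*t) * N + 3*t - 3)"
    unfolding e1 e2 N_def by (simp add: algebra_simps x_def power2_eq_square power3_eq_cube)
  have G1: "(3*a - 5*a^3 + 2*a^(2*n+1)) * real n + 3*a^(2*n+1) - 3*a \<ge> 0"
    unfolding P1 using apos A1 by simp
  have Apos: "-3 + 30*x - 35*x^2 \<ge> 0"
  proof -
    have "(x - 0.2) * (0.28 - x) \<ge> 0" using x1' x2' by simp
    moreover have "(x - 0.2) * (0.28 - x) = 12/25*x - 7/125 - x*x" by (simp add: algebra_simps divide_simps)
    ultimately have "x*x \<le> 12/25*x - 7/125" by linarith
    thus ?thesis using x1' x2' unfolding power2_eq_square by linarith
  qed
  have Bpos: "3 - 35*x^2 \<ge> 0"
  proof -
    have "x^2 \<le> (7/25)^2" using x1' x2' by (intro power_mono) auto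
    thus ?thesis by (simp add: power2_eq_square)
  qed
  have Q: "-6 + 90*x - 210*x^2 > 0"
  proof -
    have "(x - 0.2) * (0.28 - x) \<ge> 0" using x1' x2' by simp
    moreover have "(x - 0.2) * (0.28 - x) = 12/25*x - 7/125 - x*x" by (simp add: algebra_simps divide_simps)
    ultimately have "x*x \<le> 12/25*x - 7/125" by linarith
    thus ?thesis using x1' x2' unfolding power2_eq_square by linarith
  qed
  have N4: "N^2 \<ge> 4" using N2 by (metis power2_eq_square mult_mono less_le_trans zero_less_numeral less_imp_le numeral_times_numeral semiring_norm(12) num_double)
  have T1: "(-3 + 30*x - 35*x^2) * N^2 \<ge> (-3 + 30*x - 35*x^2) * 4"
    using Apos N4 by (intro mult_left_mono) auto
  have T2: "(3 - 35*x^2) * N \<ge> (3 - 35*x^2) * 2"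
    using Bpos N2 by (intro mult_left_mono) auto
  have T3: "x*t*(8*N^2 + 32*N + 30) \<ge> 0" using tpos x1' N2 by simp
  have G2: "(-3 + 30*a^2 - 35*a^4 + 8*a^(2*n+2)) * (real n)^2
          + (3 - 35*a^4 + 32*a^(2*n+2)) * real n + 30*a^(2*n+2) - 30*a^2 \<ge> 0"
    unfolding e3 e4 N_def[symmetric] x_def[symmetric]
    using T1 T2 T3 Q by (simp add: algebra_simps)
  show ?thesis using G1 G2 by simp
qed

end
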